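(* Let $\mathcal{G}$ be a finite-dimensional solvable Lie algebra and let $S$ be a finite abelian semigroup containing a zero element $0_S$. Then the $0_S$-reduced algebra $\mathcal{G}_S^{\mathrm{red}}$ obtained from the $S$-expanded algebra $\mathcal{G}_S=S\otimes\mathcal{G}$ is solvable.
   Context: For a Lie algebra $\mathcal{G}$ with basis $\{X_i\}$, $[X_i,X_j]=C_{ij}^kX_k$, and a finite abelian semigroup $S=\{\lambda_\alpha\}$ with 2-selector $K_{\alpha\beta}^\gamma$ ($=1$ if $\lambda_\alpha\lambda_\beta=\lambda_\gamma$, else $0$), the $S$-expanded algebra $\mathcal{G}_S=S\otimes\mathcal{G}$ has basis $X_{(i,\alpha)}=\lambda_\alpha\otimes X_i$ and bracket $[X_{(i,\alpha)},X_{(j,\beta)}]=K_{\alpha\beta}^\gamma C_{ij}^k X_{(k,\gamma)}$. A zero element is $0_S\in S$ with $0_S\lambda=0_S$ for all $\lambda\in S$. The $0_S$-reduced algebra $\mathcal{G}_S^{\mathrm{red}}$ is the Lie algebra spanned by $X_{(i,\alpha)}$ with $\lambda_\alpha\neq 0_S$, with bracket $[X_{(i,\alpha)},X_{(j,\beta)}]=\sum_{\gamma:\lambda_\gamma\neq0_S}K_{\alpha\beta}^\gamma C_{ij}^k X_{(k,\gamma)}$ (i.e. obtained by setting $0_S\otimes\mathcal{G}=0$). *)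

theory Defs
  imports Main
begin

text \<open>Finite-dimensional Lie algebras are given by a finite index set I of basis
  elements and structure constants C i j k (so [X_i,X_j] = sum_k C i j k X_k).
  Elements are coordinate vectors 'a => 'k supported on I.\<close>

definition lie_space :: "'a set \<Rightarrow> ('a \<Rightarrow> 'k::field) set" where
  "lie_space I = {x. \<forall>k. k \<notin> I \<longrightarrow> x k = 0}"

definition lin_span :: "('a \<Rightarrow> 'k::field) set \<Rightarrow> ('a \<Rightarrow> 'k) set" where
  "lin_span A = {x. \<exists>F c. finite F \<and> F \<subseteq> A \<and> x = (\<lambda>k. \<Sum>v\<in>F. c v * v k)}"

definition bracket :: "('a \<Rightarrow> 'a \<Rightarrow> 'a \<Rightarrow> 'k::field) \<Rightarrow> 'a set
    \<Rightarrow> ('a \<Rightarrow> 'k) \<Rightarrow> ('a \<Rightarrow> 'k) \<Rightarrow> ('a \<Rightarrow> 'k)" where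
  "bracket C I x y = (\<lambda>k. if k \<in> I then (\<Sum>i\<in>I. \<Sum>j\<in>I. x i * y j * C i j k) else 0)"

definition is_lie_algebra :: "('a \<Rightarrow> 'a \<Rightarrow> 'a \<Rightarrow> 'k::field) \<Rightarrow> 'a set \<Rightarrow> bool" where
  "is_lie_algebra C I \<longleftrightarrow> finite I \<and>
     (\<forall>i\<in>I. \<forall>j\<in>I. \<forall>k\<in>I. C i j k = - C j i k) \<and>
     (\<forall>i\<in>I. \<forall>j\<in>I. \<forall>l\<in>I. \<forall>n\<in>I.
        (\<Sum>m\<in>I. C i j m * C m l n + C j l m * C m i n + C l i m * C m j n) = 0)"

fun derived :: "('a \<Rightarrow> 'a \<Rightarrow> 'a \<Rightarrow> 'k::field) \<Rightarrow> 'a set \<Rightarrow> nat \<Rightarrow> ('a \<Rightarrow> 'k) set" where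
  "derived C I 0 = lie_space I"
| "derived C I (Suc n) =
     lin_span {bracket C I x y | x y. x \<in> derived C I n \<and> y \<in> derived C I n}"

definition solvable_lie :: "('a \<Rightarrow> 'a \<Rightarrow> 'a \<Rightarrow> 'k::field) \<Rightarrow> 'a set \<Rightarrow> bool" where
  "solvable_lie C I \<longleftrightarrow> (\<exists>n. derived C I n = {\<lambda>_. 0})"

definition selector :: "'s::ab_semigroup_mult \<Rightarrow> 's \<Rightarrow> 's \<Rightarrow> 'k::field" where
  "selector \<alpha> \<beta> \<gamma> = (if \<alpha> * \<beta> = \<gamma> then 1 else 0)"

definition expanded_sc :: "('i \<Rightarrow> 'i \<Rightarrow> 'i \<Rightarrow> 'k::field)
    \<Rightarrow> ('i \<times> 's::ab_semigroup_mult) \<Rightarrow> ('i \<times> 's) \<Rightarrow> ('i \<times> 's) \<Rightarrow> 'k" where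
  "expanded_sc C = (\<lambda>(i,\<alpha>) (j,\<beta>) (k,\<gamma>). selector \<alpha> \<beta> \<gamma> * C i j k)"

text \<open>Basis index set of the 0_S-reduced algebra: pairs with lambda_alpha /= 0_S.
  The reduced algebra is (expanded_sc C) restricted to this index set.\<close>
definition reduced_index :: "'s \<Rightarrow> ('i \<times> 's) set" where
  "reduced_index z = UNIV \<times> {\<alpha>. \<alpha> \<noteq> z}"

end

theory Submission
  imports Defs
begin

definition subsp :: "('a \<Rightarrow> 'k::field) set \<Rightarrow> bool" where
  "subsp S \<longleftrightarrow> (\<lambda>_. 0) \<in> S \<and> (\<forall>x\<in>S. \<forall>y\<in>S. (\<lambda>k. x k + y k) \<in> S)
     \<and> (\<forall>a. \<forall>x\<in>S. (\<lambda>k. a * x k) \<in> S)"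

lemma subsp_sum:
  assumes "subsp S" "finite A" "\<forall>a\<in>A. f a \<in> S"
  shows "(\<lambda>k. \<Sum>a\<in>A. c a * f a k) \<in> S"
  using assms(2,3)
proof (induction A rule: finite_induct)
  case empty then show ?case using assms(1) by (simp add: subsp_def)
next
  case (insert a A)
  have h1: "(\<lambda>k. c a * f a k) \<in> S" using insert assms(1) by (simp add: subsp_def)
  have h2: "(\<lambda>k. \<Sum>a\<in>A. c a * f a k) \<in> S" using insert by simp
  have "(\<lambda>k. c a * f a k + (\<Sum>a\<in>A. c a * f a k)) \<in> S"
  proof -
    have "\<forall>x\<in>S. \<forall>y\<in>S. (\<lambda>k. x k + y k) \<in> S" using assms(1) unfolding subsp_def by blast
    from bspec[OF bspec[OF this h1] h2] show ?thesis by simp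
  qed
  then show ?case using insert by simp
qed

lemma lin_span_sub: "subsp S \<Longrightarrow> A \<subseteq> S \<Longrightarrow> lin_span A \<subseteq> S"
  unfolding lin_span_def using subsp_sum[where f="\<lambda>v. v"] by blast

lemma gen_in_span: "v \<in> A \<Longrightarrow> v \<in> lin_span A"
  unfolding lin_span_def
  by (rule CollectI, rule exI[of _ "{v}"], rule exI[of _ "\<lambda>_. 1"]) auto

lemma subsp_lin_span: "subsp (lin_span A)"
  unfolding subsp_def
proof (intro conjI ballI allI)
  show "(\<lambda>_. 0) \<in> lin_span A" unfolding lin_span_def by auto
next
  fix a x assume "x \<in> lin_span A"
  then obtain F c where "finite F" "F \<subseteq> A" "x = (\<lambda>k. \<Sum>v\<in>F. c v * v k)"
    unfolding lin_span_def by blast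
  then show "(\<lambda>k. a * x k) \<in> lin_span A" unfolding lin_span_def
    by (intro CollectI exI[of _ F] exI[of _ "\<lambda>v. a * c v"])
       (auto simp: sum_distrib_left mult.assoc)
next
  fix x y assume "x \<in> lin_span A" "y \<in> lin_span A"
  then obtain F c G d where F: "finite F" "F \<subseteq> A" "x = (\<lambda>k. \<Sum>v\<in>F. c v * v k)"
    and G: "finite G" "G \<subseteq> A" "y = (\<lambda>k. \<Sum>v\<in>G. d v * v k)"
    unfolding lin_span_def by blast
  define e where "e v = (if v \<in> F then c v else 0) + (if v \<in> G then d v else 0)" for v
  have "\<And>k. x k + y k = (\<Sum>v\<in>F\<union>G. e v * v k)"
  proof -
    fix k
    have "(\<Sum>v\<in>F\<union>G. e v * v k) = (\<Sum>v\<in>F\<union>G. (if v \<in> F then c v * v k else 0))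
        + (\<Sum>v\<in>F\<union>G. (if v \<in> G then d v * v k else 0))"
      unfolding e_def sum.distrib[symmetric] by (intro sum.cong) (auto simp: distrib_right)
    also have "\<dots> = (\<Sum>v\<in>F. c v * v k) + (\<Sum>v\<in>G. d v * v k)"
      using F G by (simp add: sum.inter_restrict[symmetric] Int_absorb1 Int_absorb2 Un_Int_eq)
    finally show "x k + y k = (\<Sum>v\<in>F\<union>G. e v * v k)" using F G by simp
  qed
  then show "(\<lambda>k. x k + y k) \<in> lin_span A" unfolding lin_span_def
    using F G by (intro CollectI exI[of _ "F \<union> G"] exI[of _ e]) auto
qed

lemma subsp_lie_space: "subsp (lie_space I)"
  unfolding subsp_def lie_space_def by auto

lemma subsp_derived: "subsp (derived C I n)"
  by (cases n) (auto simp: subsp_lie_space subsp_lin_span)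

lemma sum4_swap:
  fixes f :: "'i \<Rightarrow> 's \<Rightarrow> 'i \<Rightarrow> 's \<Rightarrow> 'k::comm_monoid_add"
  assumes "finite (UNIV::'i set)" "finite A"
  shows "(\<Sum>i\<in>UNIV. \<Sum>a\<in>A. \<Sum>j\<in>UNIV. \<Sum>b\<in>A. f i a j b)
       = (\<Sum>a\<in>A. \<Sum>b\<in>A. \<Sum>i\<in>UNIV. \<Sum>j\<in>UNIV. f i a j b)"
proof -
  have "(\<Sum>i\<in>UNIV. \<Sum>a\<in>A. \<Sum>j\<in>UNIV. \<Sum>b\<in>A. f i a j b)
      = (\<Sum>a\<in>A. \<Sum>i\<in>UNIV. \<Sum>j\<in>UNIV. \<Sum>b\<in>A. f i a j b)"
    by (rule sum.swap)
  also have "\<dots> = (\<Sum>a\<in>A. \<Sum>i\<in>UNIV. \<Sum>b\<in>A. \<Sum>j\<in>UNIV. f i a j b)"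
    by (intro sum.cong refl sum.swap)
  also have "\<dots> = (\<Sum>a\<in>A. \<Sum>b\<in>A. \<Sum>i\<in>UNIV. \<Sum>j\<in>UNIV. f i a j b)"
    by (intro sum.cong refl sum.swap)
  finally show ?thesis .
qed

lemma sum_prod_split: "(\<Sum>p\<in>A\<times>B. f p) = (\<Sum>a\<in>A. \<Sum>b\<in>B. f (a,b))"
  by (simp add: sum.cartesian_product)

lemma bracket_eq:
  fixes C :: "'i::finite \<Rightarrow> 'i \<Rightarrow> 'i \<Rightarrow> 'k::field"
    and z :: "'s::{ab_semigroup_mult, finite}"
  assumes "\<gamma> \<noteq> z"
  shows "bracket (expanded_sc C) (reduced_index z) x y (m,\<gamma>)
    = (\<Sum>p\<in>{\<alpha>. \<alpha> \<noteq> z} \<times> {\<alpha>. \<alpha> \<noteq> z}. selector (fst p) (snd p) \<gamma> *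
         bracket C UNIV (\<lambda>i. x (i, fst p)) (\<lambda>i. y (i, snd p)) m)"
proof -
  let ?A = "{\<alpha>::'s. \<alpha> \<noteq> z}"
  have "bracket (expanded_sc C) (reduced_index z) x y (m,\<gamma>)
     = (\<Sum>p\<in>UNIV \<times> ?A. \<Sum>q\<in>UNIV \<times> ?A. x p * y q * expanded_sc C p q (m,\<gamma>))"
    using assms by (simp add: bracket_def reduced_index_def)
  also have "\<dots> = (\<Sum>i\<in>UNIV. \<Sum>a\<in>?A. \<Sum>j\<in>UNIV. \<Sum>b\<in>?A.
        selector a b \<gamma> * (x (i,a) * y (j,b) * C i j m))"
    by (simp add: sum_prod_split expanded_sc_def mult_ac sum_distrib_left)
  also have "\<dots> = (\<Sum>a\<in>?A. \<Sum>b\<in>?A. \<Sum>i\<in>UNIV. \<Sum>j\<in>UNIV.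
        selector a b \<gamma> * (x (i,a) * y (j,b) * C i j m))"
    by (rule sum4_swap) auto
  also have "\<dots> = (\<Sum>p\<in>?A \<times> ?A. selector (fst p) (snd p) \<gamma> *
         bracket C UNIV (\<lambda>i. x (i, fst p)) (\<lambda>i. y (i, snd p)) m)"
    by (simp add: sum_prod_split bracket_def sum_distrib_left mult_ac)
  finally show ?thesis .
qed

definition Tset :: "('i \<Rightarrow> 'i \<Rightarrow> 'i \<Rightarrow> 'k::field) \<Rightarrow> 's \<Rightarrow> nat \<Rightarrow> ('i \<times> 's \<Rightarrow> 'k) set" where
  "Tset C z n = {x. (\<forall>k. k \<notin> (reduced_index z :: ('i \<times> 's) set) \<longrightarrow> x k = 0) \<and>
      (\<forall>\<alpha>. (\<lambda>i. x (i,\<alpha>)) \<in> derived C UNIV n)}"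

lemma subsp_Tset:
  fixes C :: "'i \<Rightarrow> 'i \<Rightarrow> 'i \<Rightarrow> 'k::field" and z :: 's
  shows "subsp (Tset C z n)"
proof -
  have S: "subsp (derived C UNIV n)" by (rule subsp_derived)
  have z: "(\<lambda>_. 0) \<in> derived C UNIV n" using S unfolding subsp_def by blast
  have add: "\<forall>x\<in>derived C UNIV n. \<forall>y\<in>derived C UNIV n. (\<lambda>k. x k + y k) \<in> derived C UNIV n"
    using S unfolding subsp_def by blast
  have sc: "\<forall>a. \<forall>x\<in>derived C UNIV n. (\<lambda>k. a * x k) \<in> derived C UNIV n"
    using S unfolding subsp_def by blast
  show ?thesis unfolding subsp_def
  proof (intro conjI ballI allI)
    show "(\<lambda>_. 0) \<in> Tset C z n" using z by (simp add: Tset_def)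
  next
    fix x y :: "'i \<times> 's \<Rightarrow> 'k" assume x: "x \<in> Tset C z n" and y: "y \<in> Tset C z n"
    show "(\<lambda>k. x k + y k) \<in> Tset C z n" unfolding Tset_def
    proof (intro CollectI conjI allI impI)
      fix k :: "'i \<times> 's" assume "k \<notin> reduced_index z" then show "x k + y k = 0" using x y unfolding Tset_def by (cases k) auto
    next
      fix \<alpha>
      have "(\<lambda>i. x (i,\<alpha>)) \<in> derived C UNIV n" "(\<lambda>i. y (i,\<alpha>)) \<in> derived C UNIV n"
        using x y by (auto simp: Tset_def)
      from bspec[OF bspec[OF add this(1)] this(2)]
      show "(\<lambda>i. x (i,\<alpha>) + y (i,\<alpha>)) \<in> derived C UNIV n" by simp
    qed
  next
    fix a and x :: "'i \<times> 's \<Rightarrow> 'k" assume x: "x \<in> Tset C z n"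
    show "(\<lambda>k. a * x k) \<in> Tset C z n" unfolding Tset_def
    proof (intro CollectI conjI allI impI)
      fix k :: "'i \<times> 's" assume "k \<notin> reduced_index z" then show "a * x k = 0" using x unfolding Tset_def by (cases k) auto
    next
      fix \<alpha>
      have "(\<lambda>i. x (i,\<alpha>)) \<in> derived C UNIV n" using x by (auto simp: Tset_def)
      from bspec[OF spec[OF sc, of a] this]
      show "(\<lambda>i. a * x (i,\<alpha>)) \<in> derived C UNIV n" by simp
    qed
  qed
qed

lemma bracket_Tset:
  fixes C :: "'i::finite \<Rightarrow> 'i \<Rightarrow> 'i \<Rightarrow> 'k::field"
    and z :: "'s::{ab_semigroup_mult, finite}"
  assumes x: "x \<in> Tset C z n" and y: "y \<in> Tset C z n"
  shows "bracket (expanded_sc C) (reduced_index z) x y \<in> Tset C z (Suc n)"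
  unfolding Tset_def
proof (intro CollectI conjI allI impI)
  fix k :: "'i \<times> 's" assume "k \<notin> reduced_index z"
  then show "bracket (expanded_sc C) (reduced_index z) x y k = 0" by (simp add: bracket_def)
next
  fix \<gamma> :: 's
  have S: "subsp (derived C UNIV (Suc n))" by (rule subsp_derived)
  show "(\<lambda>i. bracket (expanded_sc C) (reduced_index z) x y (i,\<gamma>)) \<in> derived C UNIV (Suc n)"
  proof (cases "\<gamma> = z")
    case True
    then have "(\<lambda>i. bracket (expanded_sc C) (reduced_index z) x y (i,\<gamma>)) = (\<lambda>_. 0)"
      by (simp add: bracket_def reduced_index_def)
    then show ?thesis using S unfolding subsp_def by simp
  next
    case False
    have mem: "\<forall>p\<in>{\<alpha>. \<alpha> \<noteq> z} \<times> {\<alpha>. \<alpha> \<noteq> z}.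
        bracket C UNIV (\<lambda>i. x (i, fst p)) (\<lambda>i. y (i, snd p)) \<in> derived C UNIV (Suc n)"
    proof
      fix p :: "'s \<times> 's"
      have "(\<lambda>i. x (i, fst p)) \<in> derived C UNIV n" "(\<lambda>i. y (i, snd p)) \<in> derived C UNIV n"
        using x y by (auto simp: Tset_def)
      then show "bracket C UNIV (\<lambda>i. x (i, fst p)) (\<lambda>i. y (i, snd p)) \<in> derived C UNIV (Suc n)"
        by (auto intro!: gen_in_span)
    qed
    have "(\<lambda>m. \<Sum>p\<in>{\<alpha>. \<alpha> \<noteq> z} \<times> {\<alpha>. \<alpha> \<noteq> z}. selector (fst p) (snd p) \<gamma> *
         bracket C UNIV (\<lambda>i. x (i, fst p)) (\<lambda>i. y (i, snd p)) m) \<in> derived C UNIV (Suc n)"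
      by (rule subsp_sum[OF S _ mem]) simp
    then show ?thesis using bracket_eq[OF False, of C x y] by simp
  qed
qed

lemma derived_sub_Tset:
  fixes C :: "'i::finite \<Rightarrow> 'i \<Rightarrow> 'i \<Rightarrow> 'k::field"
    and z :: "'s::{ab_semigroup_mult, finite}"
  shows "derived (expanded_sc C) (reduced_index z) n \<subseteq> Tset C z n"
proof (induction n)
  case 0
  then show ?case by (auto simp: Tset_def lie_space_def)
next
  case (Suc n)
  show ?case unfolding derived.simps
    by (rule lin_span_sub[OF subsp_Tset]) (use Suc bracket_Tset in blast)
qed

theorem theorem3:
  fixes C :: "'i::finite \<Rightarrow> 'i \<Rightarrow> 'i \<Rightarrow> 'k::field"
    and z :: "'s::{ab_semigroup_mult, finite}"
  assumes "is_lie_algebra C UNIV"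
    and "solvable_lie C UNIV"
    and "\<forall>s. z * s = z"
  shows "solvable_lie (expanded_sc C) (reduced_index z :: ('i \<times> 's) set)"
proof -
  obtain N where N: "derived C UNIV N = {\<lambda>_. 0}" using assms(2) by (auto simp: solvable_lie_def)
  have "derived (expanded_sc C) (reduced_index z :: ('i \<times> 's) set) N = {\<lambda>_. 0}"
  proof
    show "derived (expanded_sc C) (reduced_index z :: ('i \<times> 's) set) N \<subseteq> {\<lambda>_. 0}"
    proof
      fix x assume "x \<in> derived (expanded_sc C) (reduced_index z :: ('i \<times> 's) set) N"
      then have "x \<in> Tset C z N" using derived_sub_Tset by blast
      then have "\<forall>\<alpha>. (\<lambda>i. x (i,\<alpha>)) = (\<lambda>_. 0)" using N by (auto simp: Tset_def)
      then have "x = (\<lambda>_. 0)" by (auto simp: fun_eq_iff dest: fun_cong)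
      then show "x \<in> {\<lambda>_. 0}" by simp
    qed
  next
    show "{\<lambda>_. 0} \<subseteq> derived (expanded_sc C) (reduced_index z :: ('i \<times> 's) set) N"
      using subsp_derived[of "expanded_sc C" "reduced_index z :: ('i \<times> 's) set" N]
      unfolding subsp_def by auto
  qed
  then show ?thesis unfolding solvable_lie_def by blast
qed

end
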